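(* Let $\Sigma$ be a ranked alphabet, $B$ a strong bimonoid, $\mathcal{A}=(Q,\delta,F)$ a $(\Sigma,B)$-wta and $\xi=\sigma(\xi_1,\dots,\xi_k)\in T_\Sigma$. Then: (i)(a) if $h^{\neq\mathbb{0}}_{\mathrm{V}(\mathcal{A})}(\xi_i)=\emptyset$ for some $i\in[k]$, then $h^{\neq\mathbb{0}}_{\mathrm{V}(\mathcal{A})}(\xi)=\emptyset$; (b) if $R^{\neq\mathbb{0}}_{\mathcal{A}}(\xi_i)=\emptyset$ for some $i\in[k]$, then $R^{\neq\mathbb{0}}_{\mathcal{A}}(\xi)=\emptyset$. Moreover, if $\mathcal{A}$ is bottom-up deterministic, then also: (ii) (a) $|h^{\neq\mathbb{0}}_{\mathrm{V}(\mathcal{A})}(\xi)|\le 1$ and (b) $|R^{\neq\mathbb{0}}_{\mathcal{A}}(\xi)|\le 1$; (iii) either (a) $h^{\neq\mathbb{0}}_{\mathrm{V}(\mathcal{A})}(\xi)=\emptyset=R^{\neq\mathbb{0}}_{\mathcal{A}}(\xi)$, or (b) there is $q\in Q$ with $h^{\neq\mathbb{0}}_{\mathrm{V}(\mathcal{A})}(\xi)=\{q\}=R^{\neq\mathbb{0}}_{\mathcal{A}}(\xi)$, and there is exactly one $\rho\in R_{\mathcal{A}}(q,\xi)$ with $\mathrm{wt}_{\mathcal{A}}(\rho)\neq\mathbb{0}$, and for it $h_{\mathrm{V}(\mathcal{A})}(\xi)_q=\mathrm{wt}_{\mathcal{A}}(\rho)$.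
   Context: Ranked alphabet $\Sigma$ (finite, with ranks; $\Sigma^{(k)}$ the symbols of rank $k$; $\Sigma^{(0)}\neq\emptyset$), trees $T_\Sigma$, positions $\mathrm{pos}(\xi)$ ($\mathrm{pos}(\sigma(\xi_1,\dots,\xi_k))=\{\varepsilon\}\cup\{iv\mid i\in[k],v\in\mathrm{pos}(\xi_i)\}$). A strong bimonoid $(B,\oplus,\otimes,\mathbb{0},\mathbb{1})$: $(B,\oplus,\mathbb{0})$ commutative monoid, $(B,\otimes,\mathbb{1})$ monoid, $\mathbb{0}\ne\mathbb{1}$, $\mathbb{0}$ multiplicatively absorbing; no distributivity. $\bigotimes_{i=1}^k a_i=a_1\otimes\cdots\otimes a_k$ ($\mathbb{1}$ if $k=0$). A $(\Sigma,B)$-wta is $\mathcal{A}=(Q,\delta,F)$, $Q$ finite nonempty, $\delta_k:Q^k\times\Sigma^{(k)}\times Q\to B$, $F:Q\to B$. $h_{\mathrm{V}(\mathcal{A})}:T_\Sigma\to B^Q$ is defined recursively by $h_{\mathrm{V}(\mathcal{A})}(\sigma(\xi_1,\dots,\xi_k))_q=\bigoplus_{q_1,\dots,q_k\in Q}\big(\bigotimes_{i=1}^k h_{\mathrm{V}(\mathcal{A})}(\xi_i)_{q_i}\big)\otimes\delta_k(q_1\dots q_k,\sigma,q)$. A run on $\xi$ is a map $\rho:\mathrm{pos}(\xi)\to Q$; it is a $q$-run if $\rho(\varepsilon)=q$; $R_{\mathcal{A}}(q,\xi)$ is the set of $q$-runs; $\rho|_i(w)=\rho(iw)$; $\mathrm{wt}_{\mathcal{A}}(\rho)=\big(\bigotimes_{i=1}^k\mathrm{wt}_{\mathcal{A}}(\rho|_i)\big)\otimes\delta_k(\rho(1)\dots\rho(k),\sigma,\rho(\varepsilon))$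 for $\xi=\sigma(\xi_1,\dots,\xi_k)$. $h^{\neq\mathbb{0}}_{\mathrm{V}(\mathcal{A})}(\xi)=\{q\in Q\mid h_{\mathrm{V}(\mathcal{A})}(\xi)_q\neq\mathbb{0}\}$ and $R^{\neq\mathbb{0}}_{\mathcal{A}}(\xi)=\{q\in Q\mid \exists\rho\in R_{\mathcal{A}}(q,\xi):\mathrm{wt}_{\mathcal{A}}(\rho)\neq\mathbb{0}\}$. $\mathcal{A}$ is bottom-up deterministic if for all $k,\sigma\in\Sigma^{(k)},q_1,\dots,q_k$ there is at most one $q$ with $\delta_k(q_1\dots q_k,\sigma,q)\ne\mathbb{0}$. *)

theory Defs
  imports Main
begin

datatype 'f tree = Node 'f "'f tree list"

definition ranked_alphabet :: "'f set \<Rightarrow> ('f \<Rightarrow> nat) \<Rightarrow> bool" where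
  "ranked_alphabet Sig rk \<longleftrightarrow> finite Sig \<and> (\<exists>s\<in>Sig. rk s = 0)"

fun wf_tree :: "'f set \<Rightarrow> ('f \<Rightarrow> nat) \<Rightarrow> 'f tree \<Rightarrow> bool" where
  "wf_tree Sig rk (Node s ts) \<longleftrightarrow> s \<in> Sig \<and> length ts = rk s \<and> (\<forall>t\<in>set ts. wf_tree Sig rk t)"

definition strong_bimonoid ::
  "('b \<Rightarrow> 'b \<Rightarrow> 'b) \<Rightarrow> ('b \<Rightarrow> 'b \<Rightarrow> 'b) \<Rightarrow> 'b \<Rightarrow> 'b \<Rightarrow> bool" where
  "strong_bimonoid add mult zero one \<longleftrightarrow>
     (\<forall>a b c. add (add a b) c = add a (add b c)) \<and>
     (\<forall>a b. add a b = add b a) \<and>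
     (\<forall>a. add zero a = a) \<and>
     (\<forall>a b c. mult (mult a b) c = mult a (mult b c)) \<and>
     (\<forall>a. mult one a = a \<and> mult a one = a) \<and>
     zero \<noteq> one \<and>
     (\<forall>a. mult zero a = zero \<and> mult a zero = zero)"

definition bsum :: "('b \<Rightarrow> 'b \<Rightarrow> 'b) \<Rightarrow> 'b \<Rightarrow> ('a \<Rightarrow> 'b) \<Rightarrow> 'a set \<Rightarrow> 'b" where
  "bsum add zero g A = comm_monoid_set.F add zero g A"

definition bprod :: "('b \<Rightarrow> 'b \<Rightarrow> 'b) \<Rightarrow> 'b \<Rightarrow> 'b list \<Rightarrow> 'b" where
  "bprod mult one xs = foldr mult xs one"

definition tuples :: "'q set \<Rightarrow> nat \<Rightarrow> 'q list set" where
  "tuples Q k = {qs. length qs = k \<and> set qs \<subseteq> Q}"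

(* h_{V(A)}(xi)_q ; delta qs s q stands for delta_k(q_1...q_k, s, q) *)
fun hV :: "('b \<Rightarrow> 'b \<Rightarrow> 'b) \<Rightarrow> ('b \<Rightarrow> 'b \<Rightarrow> 'b) \<Rightarrow> 'b \<Rightarrow> 'b \<Rightarrow> 'q set
           \<Rightarrow> ('q list \<Rightarrow> 'f \<Rightarrow> 'q \<Rightarrow> 'b) \<Rightarrow> 'f tree \<Rightarrow> 'q \<Rightarrow> 'b" where
  "hV add mult zero one Q delta (Node s ts) q =
     (let vs = map (hV add mult zero one Q delta) ts in
      bsum add zero
        (\<lambda>qs. mult (bprod mult one (map (\<lambda>(v, qi). v qi) (zip vs qs))) (delta qs s q))
        (tuples Q (length ts)))"

definition hV_nz where
  "hV_nz add mult zero one Q delta xi = {q \<in> Q. hV add mult zero one Q delta xi q \<noteq> zero}"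

lemma size_in_set_less: "b \<in> set ts \<Longrightarrow> size b < Suc (size_list size ts)"
  by (induction ts) auto

(* positions; child indices are 0-based here (paper: 1-based) *)
function pos :: "'f tree \<Rightarrow> nat list set" where
  "pos (Node s ts) = {[]} \<union>
     (\<Union>(i, t) \<in> set (zip [0..<length ts] ts). (\<lambda>v. i # v) ` pos t)"
  by pat_completeness auto
termination
  by (relation "measure size") (auto dest!: set_zip_rightD simp: size_in_set_less)

definition runs :: "'q set \<Rightarrow> 'q \<Rightarrow> 'f tree \<Rightarrow> (nat list \<Rightarrow> 'q option) set" where
  "runs Q q xi = {rho. dom rho = pos xi \<and> ran rho \<subseteq> Q \<and> rho [] = Some q}"

function wt :: "('b \<Rightarrow> 'b \<Rightarrow> 'b) \<Rightarrow> ('b \<Rightarrow> 'b \<Rightarrow> 'b) \<Rightarrow> 'b \<Rightarrow> 'b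
           \<Rightarrow> ('q list \<Rightarrow> 'f \<Rightarrow> 'q \<Rightarrow> 'b) \<Rightarrow> 'f tree \<Rightarrow> (nat list \<Rightarrow> 'q option) \<Rightarrow> 'b" where
  "wt add mult zero one delta (Node s ts) rho =
     mult (bprod mult one (map (\<lambda>(i, t). wt add mult zero one delta t (\<lambda>w. rho (i # w)))
                              (zip [0..<length ts] ts)))
          (delta (map (\<lambda>i. the (rho [i])) [0..<length ts]) s (the (rho [])))"
  by pat_completeness auto
termination
  by (relation "measure (\<lambda>(_,_,_,_,_,t,_). size t)")
     (auto dest!: set_zip_rightD simp: size_in_set_less)

definition R_nz where
  "R_nz add mult zero one Q delta xi =
     {q \<in> Q. \<exists>rho \<in> runs Q q xi. wt add mult zero one delta xi rho \<noteq> zero}"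

definition bu_deterministic ::
  "'f set \<Rightarrow> ('f \<Rightarrow> nat) \<Rightarrow> 'b \<Rightarrow> 'q set \<Rightarrow> ('q list \<Rightarrow> 'f \<Rightarrow> 'q \<Rightarrow> 'b) \<Rightarrow> bool" where
  "bu_deterministic Sig rk zero Q delta \<longleftrightarrow>
     (\<forall>s\<in>Sig. \<forall>qs\<in>tuples Q (rk s). \<forall>p\<in>Q. \<forall>q\<in>Q.
        delta qs s p \<noteq> zero \<longrightarrow> delta qs s q \<noteq> zero \<longrightarrow> p = q)"

end

theory Submission
  imports Defs
begin

lemma pos_Node: "pos (Node s ts) = insert [] {i#v | i v. i < length ts \<and> v \<in> pos (ts!i)}"
  by (auto simp: set_zip)

lemma nil_pos: "[] \<in> pos t"
  by (cases t) simp

lemma map_zip_upt: "map (\<lambda>(i,t). f i t) (zip [0..<length ts] ts) = map (\<lambda>i. f i (ts!i)) [0..<length ts]"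
  by (rule nth_equalityI) auto

lemma map_zip_hv: "length qs = length ts \<Longrightarrow>
   map (\<lambda>(v, qi). v qi) (zip (map h ts) qs) = map (\<lambda>i. h (ts!i) (qs!i)) [0..<length ts]"
  by (rule nth_equalityI) auto

lemma run_root: "r \<in> runs Q p t \<Longrightarrow> p \<in> Q"
  unfolding runs_def by (auto simp: ran_def)

lemma run_restrict:
  assumes "rho \<in> runs Q q (Node s ts)" "i < length ts"
  shows "(\<lambda>w. rho (i#w)) \<in> runs Q (the (rho [i])) (ts!i)"
proof -
  have d: "dom rho = pos (Node s ts)" and r: "ran rho \<subseteq> Q" using assms(1) by (auto simp: runs_def)
  have "dom (\<lambda>w. rho (i#w)) = pos (ts!i)"
    using d assms(2) unfolding pos_Node by (auto simp: dom_def)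
  moreover have "ran (\<lambda>w. rho (i#w)) \<subseteq> Q" using r by (auto simp: ran_def)
  moreover have "rho [i] \<noteq> None" using d assms(2) nil_pos[of "ts!i"] unfolding pos_Node by (auto simp: dom_def)
  ultimately show ?thesis by (auto simp: runs_def)
qed

lemma run_combine:
  assumes "q \<in> Q" "\<And>i. i < length ts \<Longrightarrow> rs i \<in> runs Q (qf i) (ts!i)"
  defines "rho \<equiv> (\<lambda>w. case w of [] \<Rightarrow> Some q | i#v \<Rightarrow> if i < length ts then rs i v else None)"
  shows "rho \<in> runs Q q (Node s ts)" "\<And>i. i < length ts \<Longrightarrow> (\<lambda>w. rho (i#w)) = rs i"
    "\<And>i. i < length ts \<Longrightarrow> the (rho [i]) = qf i" "the (rho []) = q"
proof -
  have dr: "dom (rs i) = pos (ts!i)" "ran (rs i) \<subseteq> Q" "rs i [] = Some (qf i)" if "i < length ts" for i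
    using assms(2)[OF that] by (auto simp: runs_def)
  have "dom rho = pos (Node s ts)"
  proof (rule set_eqI)
    fix w show "w \<in> dom rho \<longleftrightarrow> w \<in> pos (Node s ts)"
      unfolding pos_Node using dr(1) by (cases w) (auto simp: rho_def dom_def)
  qed
  moreover have "ran rho \<subseteq> Q"
  proof
    fix x assume "x \<in> ran rho"
    then obtain w where w: "rho w = Some x" by (auto simp: ran_def)
    show "x \<in> Q"
    proof (cases w)
      case Nil then show ?thesis using w assms(1) by (simp add: rho_def)
    next
      case (Cons i v) then show ?thesis using w dr(2)
        by (auto simp: rho_def ran_def split: if_splits)
    qed
  qed
  ultimately show "rho \<in> runs Q q (Node s ts)" by (simp add: runs_def rho_def)
  show "\<And>i. i < length ts \<Longrightarrow> (\<lambda>w. rho (i#w)) = rs i" by (simp add: rho_def)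
  show "\<And>i. i < length ts \<Longrightarrow> the (rho [i]) = qf i" using dr(3) by (simp add: rho_def)
  show "the (rho []) = q" by (simp add: rho_def)
qed

context
  fixes add mult :: "'b \<Rightarrow> 'b \<Rightarrow> 'b" and zero one :: 'b
  assumes sb: "strong_bimonoid add mult zero one"
begin

lemma mz: "mult zero a = zero" "mult a zero = zero"
  using sb unfolding strong_bimonoid_def by auto

lemma cms: "comm_monoid_set add zero"
proof -
  have "comm_monoid add zero"
    using sb unfolding strong_bimonoid_def
    by unfold_locales metis+
  then show ?thesis by (simp add: comm_monoid_set_def)
qed

lemma bprod_zero: "zero \<in> set xs \<Longrightarrow> bprod mult one xs = zero"
  by (induction xs) (auto simp: bprod_def mz)

lemma bsum_zero: "\<forall>x\<in>A. g x = zero \<Longrightarrow> bsum add zero g A = zero"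
  unfolding bsum_def using comm_monoid_set.neutral[OF cms] by blast

lemma bsum_cong: "(\<And>x. x \<in> A \<Longrightarrow> g x = h x) \<Longrightarrow> bsum add zero g A = bsum add zero h A"
  unfolding bsum_def using comm_monoid_set.cong[OF cms] by blast

lemma bsum_single:
  assumes "finite A" "x \<in> A" "\<forall>y\<in>A-{x}. g y = zero"
  shows "bsum add zero g A = g x"
proof -
  have "bsum add zero g A = add (g x) (bsum add zero g (A - {x}))"
    unfolding bsum_def using comm_monoid_set.remove[OF cms assms(1,2)] by blast
  also have "bsum add zero g (A - {x}) = zero" using bsum_zero assms(3) by blast
  finally show ?thesis using sb unfolding strong_bimonoid_def by metis
qed

lemma hV_Node: "hV add mult zero one Q delta (Node s ts) q =
   bsum add zero (\<lambda>qs. mult (bprod mult one (map (\<lambda>i. hV add mult zero one Q delta (ts!i) (qs!i)) [0..<length ts]))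
     (delta qs s q)) (tuples Q (length ts))"
  by (simp add: Let_def, rule bsum_cong) (simp add: tuples_def map_zip_hv)

lemma wt_Node: "wt add mult zero one delta (Node s ts) rho =
   mult (bprod mult one (map (\<lambda>i. wt add mult zero one delta (ts!i) (\<lambda>w. rho (i#w))) [0..<length ts]))
        (delta (map (\<lambda>i. the (rho [i])) [0..<length ts]) s (the (rho [])))"
  by (simp add: map_zip_upt)

lemma wt_nz:
  assumes "wt add mult zero one delta (Node s ts) rho \<noteq> zero"
  shows "\<And>i. i < length ts \<Longrightarrow> wt add mult zero one delta (ts!i) (\<lambda>w. rho (i#w)) \<noteq> zero"
    "delta (map (\<lambda>i. the (rho [i])) [0..<length ts]) s (the (rho [])) \<noteq> zero"
proof -
  fix i assume i: "i < length ts"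
  show "wt add mult zero one delta (ts!i) (\<lambda>w. rho (i#w)) \<noteq> zero"
  proof
    assume "wt add mult zero one delta (ts!i) (\<lambda>w. rho (i#w)) = zero"
    then have "zero \<in> set (map (\<lambda>i. wt add mult zero one delta (ts!i) (\<lambda>w. rho (i#w))) [0..<length ts])"
      using i by force
    then show False using assms bprod_zero by (simp add: wt_Node mz del: wt.simps)
  qed
next
  show "delta (map (\<lambda>i. the (rho [i])) [0..<length ts]) s (the (rho [])) \<noteq> zero"
  proof
    assume "delta (map (\<lambda>i. the (rho [i])) [0..<length ts]) s (the (rho [])) = zero"
    then show False using assms by (simp only: wt_Node mz) simp
  qed
qed

lemma L_ia:
  assumes "i < length ts" "\<forall>p\<in>Q. hV add mult zero one Q delta (ts!i) p = zero"
  shows "hV add mult zero one Q delta (Node s ts) q = zero"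
  unfolding hV_Node
proof (rule bsum_zero, intro ballI)
  fix qs assume "qs \<in> tuples Q (length ts)"
  then have "qs ! i \<in> Q" using assms(1) by (auto simp: tuples_def)
  then have "zero \<in> set (map (\<lambda>i. hV add mult zero one Q delta (ts!i) (qs!i)) [0..<length ts])"
    using assms by force
  then show "mult (bprod mult one (map (\<lambda>i. hV add mult zero one Q delta (ts!i) (qs!i)) [0..<length ts]))
     (delta qs s q) = zero" by (simp add: bprod_zero mz)
qed

lemma L_ib:
  assumes "i < length ts" "\<forall>p\<in>Q. \<forall>r\<in>runs Q p (ts!i). wt add mult zero one delta (ts!i) r = zero"
    "rho \<in> runs Q q (Node s ts)"
  shows "wt add mult zero one delta (Node s ts) rho = zero"
proof (rule ccontr)
  assume "wt add mult zero one delta (Node s ts) rho \<noteq> zero"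
  from wt_nz(1)[OF this assms(1)] run_restrict[OF assms(3,1)] run_root[OF run_restrict[OF assms(3,1)]] assms(2)
  show False by blast
qed

lemma U:
  assumes "wf_tree Sig rk t" "bu_deterministic Sig rk zero Q delta"
  shows "r1 \<in> runs Q p1 t \<Longrightarrow> r2 \<in> runs Q p2 t \<Longrightarrow> wt add mult zero one delta t r1 \<noteq> zero
    \<Longrightarrow> wt add mult zero one delta t r2 \<noteq> zero \<Longrightarrow> r1 = r2"
  using assms(1)
proof (induction t arbitrary: r1 r2 p1 p2)
  case (Node s ts)
  have wf: "s \<in> Sig" "length ts = rk s" "\<And>i. i < length ts \<Longrightarrow> wf_tree Sig rk (ts!i)"
    using Node.prems(5) by auto
  have eq: "(\<lambda>w. r1 (i#w)) = (\<lambda>w. r2 (i#w))" if i: "i < length ts" for i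
    using Node.IH[OF nth_mem[OF i] run_restrict[OF Node.prems(1) i] run_restrict[OF Node.prems(2) i]
        wt_nz(1)[OF Node.prems(3) i] wt_nz(1)[OF Node.prems(4) i] wf(3)[OF i]] .
  then have qeq: "map (\<lambda>i. the (r1 [i])) [0..<length ts] = map (\<lambda>i. the (r2 [i])) [0..<length ts]"
    by (metis (mono_tags, lifting) atLeastLessThan_iff map_eq_conv set_upt)
  have tup: "map (\<lambda>i. the (r1 [i])) [0..<length ts] \<in> tuples Q (rk s)"
    using run_root[OF run_restrict[OF Node.prems(1)]] wf(2) by (auto simp: tuples_def)
  have r12: "r1 [] = Some p1" "r2 [] = Some p2" using Node.prems(1,2) by (auto simp: runs_def)
  have "p1 = p2"
    using assms(2) wf(1) tup run_root[OF Node.prems(1)] run_root[OF Node.prems(2)]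
      wt_nz(2)[OF Node.prems(3)] wt_nz(2)[OF Node.prems(4)] qeq r12
    unfolding bu_deterministic_def by force
  show "r1 = r2"
  proof
    fix w show "r1 w = r2 w"
    proof (cases w)
      case Nil then show ?thesis using r12 \<open>p1 = p2\<close> by simp
    next
      case (Cons i v)
      show ?thesis
      proof (cases "i < length ts")
        case True then show ?thesis using eq[OF True] Cons by metis
      next
        case False
        have "w \<notin> dom r1" "w \<notin> dom r2" using Node.prems(1,2) False Cons
          unfolding runs_def pos_Node by auto
        then show ?thesis by (simp add: domIff)
      qed
    qed
  qed
qed

lemma H:
  assumes "wf_tree Sig rk t" "bu_deterministic Sig rk zero Q delta" "finite Q"
  shows "\<forall>q\<in>Q. (\<exists>rho\<in>runs Q q t. wt add mult zero one delta t rho \<noteq> zero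
            \<and> hV add mult zero one Q delta t q = wt add mult zero one delta t rho)
       \<or> (hV add mult zero one Q delta t q = zero \<and> (\<forall>rho\<in>runs Q q t. wt add mult zero one delta t rho = zero))"
  using assms(1)
proof (induction t)
  case (Node s ts)
  let ?n = "length ts"
  let ?P = "\<lambda>i p r. p \<in> Q \<and> r \<in> runs Q p (ts!i) \<and> wt add mult zero one delta (ts!i) r \<noteq> zero
            \<and> hV add mult zero one Q delta (ts!i) p = wt add mult zero one delta (ts!i) r"
  have wf: "s \<in> Sig" "length ts = rk s" "\<And>i. i < length ts \<Longrightarrow> wf_tree Sig rk (ts!i)"
    using Node.prems by auto
  have IH: "\<And>i p. i < ?n \<Longrightarrow> p \<in> Q \<Longrightarrow> (\<exists>r. ?P i p r) \<or>
      (hV add mult zero one Q delta (ts!i) p = zero \<and> (\<forall>rho\<in>runs Q p (ts!i). wt add mult zero one delta (ts!i) rho = zero))"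
    using Node.IH[OF nth_mem wf(3)] by blast
  show ?case
  proof
    fix q assume q: "q \<in> Q"
    show "(\<exists>rho\<in>runs Q q (Node s ts). wt add mult zero one delta (Node s ts) rho \<noteq> zero
            \<and> hV add mult zero one Q delta (Node s ts) q = wt add mult zero one delta (Node s ts) rho)
       \<or> (hV add mult zero one Q delta (Node s ts) q = zero \<and> (\<forall>rho\<in>runs Q q (Node s ts). wt add mult zero one delta (Node s ts) rho = zero))"
    proof (cases "\<forall>i<?n. \<exists>p r. ?P i p r")
      case True
      then have "\<forall>i. \<exists>p r. i < ?n \<longrightarrow> ?P i p r" by blast
      then obtain qf rf where qr: "\<And>i. i < ?n \<Longrightarrow> ?P i (qf i) (rf i)" by metis
      have other: "hV add mult zero one Q delta (ts!i) p = zero" if "i < ?n" "p \<in> Q" "p \<noteq> qf i" for i p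
      proof -
        { fix r assume r: "?P i p r"
          have "r = rf i" using U[OF wf(3)[OF that(1)] assms(2)] r qr[OF that(1)] by blast
          then have "p = qf i" using r qr[OF that(1)] by (auto simp: runs_def)
          with that(3) have False by simp }
        then show ?thesis using IH[OF that(1,2)] by blast
      qed
      define qs0 where "qs0 = map qf [0..<?n]"
      have qs0: "qs0 \<in> tuples Q ?n" using qr by (auto simp: qs0_def tuples_def)
      have fin: "finite (tuples Q ?n)"
        using finite_lists_length_eq[OF assms(3), of ?n] unfolding tuples_def by (metis (no_types, lifting) Collect_cong)
      have hv: "hV add mult zero one Q delta (Node s ts) q =
        mult (bprod mult one (map (\<lambda>i. wt add mult zero one delta (ts!i) (rf i)) [0..<?n])) (delta qs0 s q)"
      proof -
        have "hV add mult zero one Q delta (Node s ts) q =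
          mult (bprod mult one (map (\<lambda>i. hV add mult zero one Q delta (ts!i) (qs0!i)) [0..<?n])) (delta qs0 s q)"
          unfolding hV_Node
        proof (rule bsum_single[OF fin qs0], intro ballI)
          fix qs assume qs: "qs \<in> tuples Q ?n - {qs0}"
          have "\<exists>i<?n. qs!i \<noteq> qf i"
          proof (rule ccontr)
            assume "\<not> ?thesis"
            then have "qs = qs0" using qs by (intro nth_equalityI) (auto simp: qs0_def tuples_def)
            then show False using qs by simp
          qed
          then obtain i where i: "i < ?n" "qs!i \<noteq> qf i" by blast
          have "qs ! i \<in> Q" using qs i by (auto simp: tuples_def)
          then have "zero \<in> set (map (\<lambda>i. hV add mult zero one Q delta (ts!i) (qs!i)) [0..<?n])"
            using other[OF i(1) _ i(2)] i by force
          then show "mult (bprod mult one (map (\<lambda>i. hV add mult zero one Q delta (ts!i) (qs!i)) [0..<?n])) (delta qs s q) = zero"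
            by (simp add: bprod_zero mz)
        qed
        also have "map (\<lambda>i. hV add mult zero one Q delta (ts!i) (qs0!i)) [0..<?n]
            = map (\<lambda>i. wt add mult zero one delta (ts!i) (rf i)) [0..<?n]"
          using qr by (auto simp: qs0_def)
        finally show ?thesis .
      qed
      define rho where "rho \<equiv> (\<lambda>w. case w of [] \<Rightarrow> Some q | i#v \<Rightarrow> if i < ?n then rf i v else None)"
      note rc = run_combine[of q Q ts rf qf, OF q, folded rho_def]
      have rrun: "rho \<in> runs Q q (Node s ts)" using rc(1) qr by blast
      have wtr: "wt add mult zero one delta (Node s ts) rho =
        mult (bprod mult one (map (\<lambda>i. wt add mult zero one delta (ts!i) (rf i)) [0..<?n])) (delta qs0 s q)"
        unfolding wt_Node
      proof -
        have "map (\<lambda>i. wt add mult zero one delta (ts!i) (\<lambda>w. rho (i#w))) [0..<?n]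
          = map (\<lambda>i. wt add mult zero one delta (ts!i) (rf i)) [0..<?n]"
          using rc(2) qr by auto
        moreover have "map (\<lambda>i. the (rho [i])) [0..<?n] = qs0"
          using rc(3) qr by (auto simp: qs0_def)
        moreover have "the (rho []) = q" by (simp add: rho_def)
        ultimately show "mult (bprod mult one (map (\<lambda>i. wt add mult zero one delta (ts!i) (\<lambda>w. rho (i#w))) [0..<?n]))
          (delta (map (\<lambda>i. the (rho [i])) [0..<?n]) s (the (rho []))) =
          mult (bprod mult one (map (\<lambda>i. wt add mult zero one delta (ts!i) (rf i)) [0..<?n])) (delta qs0 s q)"
          by (simp only:)
      qed
      show ?thesis
      proof (cases "wt add mult zero one delta (Node s ts) rho = zero")
        case False
        then show ?thesis using rrun hv wtr by (metis)
      next
        case True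
        have "wt add mult zero one delta (Node s ts) rho' = zero" if r': "rho' \<in> runs Q q (Node s ts)" for rho'
        proof (rule ccontr)
          assume nz: "wt add mult zero one delta (Node s ts) rho' \<noteq> zero"
          have eqr: "(\<lambda>w. rho' (i#w)) = rf i" if i: "i < ?n" for i
            using U[OF wf(3)[OF i] assms(2) run_restrict[OF r' i], of "rf i" "qf i"] qr[OF i] wt_nz(1)[OF nz i]
            by blast
          have "map (\<lambda>i. wt add mult zero one delta (ts!i) (\<lambda>w. rho' (i#w))) [0..<?n]
            = map (\<lambda>i. wt add mult zero one delta (ts!i) (rf i)) [0..<?n]"
            using eqr by auto
          moreover have "map (\<lambda>i. the (rho' [i])) [0..<?n] = qs0"
          proof -
            have "rho' [i] = Some (qf i)" if i: "i < ?n" for i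
              using fun_cong[OF eqr[OF i], of "[]"] qr[OF i] by (auto simp: runs_def)
            then show ?thesis by (auto simp: qs0_def)
          qed
          moreover have "the (rho' []) = q" using r' by (simp add: runs_def)
          ultimately have "wt add mult zero one delta (Node s ts) rho' = wt add mult zero one delta (Node s ts) rho"
            using wtr by (simp only: wt_Node)
          then show False using nz True by simp
        qed
        then show ?thesis using hv wtr True by (metis)
      qed
    next
      case False
      then obtain i where i: "i < ?n" "\<not> (\<exists>p r. ?P i p r)" by blast
      have z: "\<forall>p\<in>Q. hV add mult zero one Q delta (ts!i) p = zero"
        "\<forall>p\<in>Q. \<forall>r\<in>runs Q p (ts!i). wt add mult zero one delta (ts!i) r = zero"
        using IH[OF i(1)] i(2) by blast+
      show ?thesis using L_ia[OF i(1) z(1)] L_ib[OF i(1) z(2)] by blast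
    qed
  qed
qed

end


theorem lemma3p5:
  fixes Sig :: "'f set" and rk :: "'f \<Rightarrow> nat"
    and add mult :: "'b \<Rightarrow> 'b \<Rightarrow> 'b" and zero one :: 'b
    and Q :: "'q set" and delta :: "'q list \<Rightarrow> 'f \<Rightarrow> 'q \<Rightarrow> 'b" and F :: "'q \<Rightarrow> 'b"
    and s :: 'f and ts :: "'f tree list"
  assumes "ranked_alphabet Sig rk"
    and "strong_bimonoid add mult zero one"
    and "finite Q" and "Q \<noteq> {}"
    and "wf_tree Sig rk (Node s ts)"
  shows
    "((\<exists>i<length ts. hV_nz add mult zero one Q delta (ts ! i) = {})
        \<longrightarrow> hV_nz add mult zero one Q delta (Node s ts) = {})
     \<and> ((\<exists>i<length ts. R_nz add mult zero one Q delta (ts ! i) = {})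
        \<longrightarrow> R_nz add mult zero one Q delta (Node s ts) = {})
     \<and> (bu_deterministic Sig rk zero Q delta \<longrightarrow>
          card (hV_nz add mult zero one Q delta (Node s ts)) \<le> 1
        \<and> card (R_nz add mult zero one Q delta (Node s ts)) \<le> 1
        \<and> ((hV_nz add mult zero one Q delta (Node s ts) = {}
             \<and> R_nz add mult zero one Q delta (Node s ts) = {})
           \<or> (\<exists>q\<in>Q. hV_nz add mult zero one Q delta (Node s ts) = {q}
                   \<and> R_nz add mult zero one Q delta (Node s ts) = {q}
                   \<and> (\<exists>!rho. rho \<in> runs Q q (Node s ts)
                            \<and> wt add mult zero one delta (Node s ts) rho \<noteq> zero)
                   \<and> (\<forall>rho. rho \<in> runs Q q (Node s ts)
                            \<and> wt add mult zero one delta (Node s ts) rho \<noteq> zero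
                            \<longrightarrow> hV add mult zero one Q delta (Node s ts) q
                                = wt add mult zero one delta (Node s ts) rho))))"
proof -
  note sb = assms(2)
  have wf: "s \<in> Sig" "length ts = rk s" "\<And>i. i < length ts \<Longrightarrow> wf_tree Sig rk (ts!i)"
    using assms(5) by auto
  have i1: "(\<exists>i<length ts. hV_nz add mult zero one Q delta (ts ! i) = {})
        \<longrightarrow> hV_nz add mult zero one Q delta (Node s ts) = {}"
  proof
    assume "\<exists>i<length ts. hV_nz add mult zero one Q delta (ts ! i) = {}"
    then obtain i where i: "i < length ts" "hV_nz add mult zero one Q delta (ts ! i) = {}" by blast
    have "\<forall>p\<in>Q. hV add mult zero one Q delta (ts!i) p = zero"
    proof
      fix p assume "p \<in> Q"
      then have "p \<notin> hV_nz add mult zero one Q delta (ts ! i)" using i(2) by (simp only: empty_iff not_False_eq_True)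
      then show "hV add mult zero one Q delta (ts!i) p = zero" using \<open>p \<in> Q\<close> unfolding hV_nz_def
        by (simp only: mem_Collect_eq de_Morgan_conj not_not simp_thms)
    qed
    note L = L_ia[OF sb i(1) this]
    show "hV_nz add mult zero one Q delta (Node s ts) = {}"
      unfolding hV_nz_def by (simp add: L del: hV.simps)
  qed
  have i2: "(\<exists>i<length ts. R_nz add mult zero one Q delta (ts ! i) = {})
        \<longrightarrow> R_nz add mult zero one Q delta (Node s ts) = {}"
  proof
    assume "\<exists>i<length ts. R_nz add mult zero one Q delta (ts ! i) = {}"
    then obtain i where i: "i < length ts" "R_nz add mult zero one Q delta (ts ! i) = {}" by blast
    have "\<forall>p\<in>Q. \<forall>r\<in>runs Q p (ts!i). wt add mult zero one delta (ts!i) r = zero"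
    proof (intro ballI)
      fix p r assume "p \<in> Q" "r \<in> runs Q p (ts!i)"
      then have "p \<notin> R_nz add mult zero one Q delta (ts ! i)" using i(2) by (simp only: empty_iff not_False_eq_True)
      then show "wt add mult zero one delta (ts!i) r = zero" using \<open>p \<in> Q\<close> \<open>r \<in> runs Q p (ts!i)\<close>
        unfolding R_nz_def by blast
    qed
    note L = L_ib[OF sb i(1) this]
    show "R_nz add mult zero one Q delta (Node s ts) = {}"
    proof (rule equals0I)
      fix q assume "q \<in> R_nz add mult zero one Q delta (Node s ts)"
      then obtain rho where "rho \<in> runs Q q (Node s ts)" "wt add mult zero one delta (Node s ts) rho \<noteq> zero"
        unfolding R_nz_def by blast
      then show False using L by blast
    qed
  qed
  have iii: "bu_deterministic Sig rk zero Q delta \<longrightarrow>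
          card (hV_nz add mult zero one Q delta (Node s ts)) \<le> 1
        \<and> card (R_nz add mult zero one Q delta (Node s ts)) \<le> 1
        \<and> ((hV_nz add mult zero one Q delta (Node s ts) = {}
             \<and> R_nz add mult zero one Q delta (Node s ts) = {})
           \<or> (\<exists>q\<in>Q. hV_nz add mult zero one Q delta (Node s ts) = {q}
                   \<and> R_nz add mult zero one Q delta (Node s ts) = {q}
                   \<and> (\<exists>!rho. rho \<in> runs Q q (Node s ts)
                            \<and> wt add mult zero one delta (Node s ts) rho \<noteq> zero)
                   \<and> (\<forall>rho. rho \<in> runs Q q (Node s ts)
                            \<and> wt add mult zero one delta (Node s ts) rho \<noteq> zero
                            \<longrightarrow> hV add mult zero one Q delta (Node s ts) q
                                = wt add mult zero one delta (Node s ts) rho)))"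
  proof
    assume det: "bu_deterministic Sig rk zero Q delta"
    let ?t = "Node s ts"
    note HH = H[OF sb assms(5) det assms(3)]
    note UU = U[OF sb assms(5) det]
    have eqs: "hV_nz add mult zero one Q delta ?t = R_nz add mult zero one Q delta ?t"
    proof (rule set_eqI)
      fix q show "q \<in> hV_nz add mult zero one Q delta ?t \<longleftrightarrow> q \<in> R_nz add mult zero one Q delta ?t"
      proof (cases "q \<in> Q")
        case True
        from HH True have "(\<exists>rho\<in>runs Q q ?t. wt add mult zero one delta ?t rho \<noteq> zero
            \<and> hV add mult zero one Q delta ?t q = wt add mult zero one delta ?t rho)
          \<or> (hV add mult zero one Q delta ?t q = zero \<and> (\<forall>rho\<in>runs Q q ?t. wt add mult zero one delta ?t rho = zero))"
          by blast
        then show ?thesis unfolding hV_nz_def R_nz_def using True by (auto simp del: wt.simps hV.simps)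
      qed (simp add: hV_nz_def R_nz_def)
    qed
    have uniq: "p1 = p2" if pp: "p1 \<in> R_nz add mult zero one Q delta ?t" "p2 \<in> R_nz add mult zero one Q delta ?t" for p1 p2
    proof -
      obtain r1 r2 where r: "r1 \<in> runs Q p1 ?t" "r2 \<in> runs Q p2 ?t"
        "wt add mult zero one delta ?t r1 \<noteq> zero" "wt add mult zero one delta ?t r2 \<noteq> zero"
        using pp unfolding R_nz_def by blast
      then have "r1 = r2" using UU by blast
      then show ?thesis using r(1,2) by (auto simp: runs_def)
    qed
    have c: "card (R_nz add mult zero one Q delta ?t) \<le> 1"
    proof -
      have fin: "finite (R_nz add mult zero one Q delta ?t)" 
        by (rule finite_subset[OF _ assms(3)]) (unfold R_nz_def, blast)
      show ?thesis using uniq card_le_Suc0_iff_eq[OF fin] by simp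
    qed
    show "card (hV_nz add mult zero one Q delta (Node s ts)) \<le> 1
        \<and> card (R_nz add mult zero one Q delta (Node s ts)) \<le> 1
        \<and> ((hV_nz add mult zero one Q delta (Node s ts) = {}
             \<and> R_nz add mult zero one Q delta (Node s ts) = {})
           \<or> (\<exists>q\<in>Q. hV_nz add mult zero one Q delta (Node s ts) = {q}
                   \<and> R_nz add mult zero one Q delta (Node s ts) = {q}
                   \<and> (\<exists>!rho. rho \<in> runs Q q (Node s ts)
                            \<and> wt add mult zero one delta (Node s ts) rho \<noteq> zero)
                   \<and> (\<forall>rho. rho \<in> runs Q q (Node s ts)
                            \<and> wt add mult zero one delta (Node s ts) rho \<noteq> zero
                            \<longrightarrow> hV add mult zero one Q delta (Node s ts) q
                                = wt add mult zero one delta (Node s ts) rho)))"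
    proof (cases "R_nz add mult zero one Q delta ?t = {}")
      case True then show ?thesis using eqs by (simp del: wt.simps hV.simps)
    next
      case False
      then obtain q where q: "q \<in> R_nz add mult zero one Q delta ?t" by blast
      then have Rq: "R_nz add mult zero one Q delta ?t = {q}" using uniq by blast
      have qQ: "q \<in> Q" using q unfolding R_nz_def by blast
      obtain r0 where r0: "r0 \<in> runs Q q ?t" "wt add mult zero one delta ?t r0 \<noteq> zero"
        using q unfolding R_nz_def by blast
      have ex1: "\<exists>!rho. rho \<in> runs Q q ?t \<and> wt add mult zero one delta ?t rho \<noteq> zero"
        using r0 UU by (intro ex1I[of _ r0]) blast+
      have hv: "hV add mult zero one Q delta ?t q = wt add mult zero one delta ?t rho"
        if rr: "rho \<in> runs Q q ?t \<and> wt add mult zero one delta ?t rho \<noteq> zero" for rho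
      proof -
        from HH qQ rr obtain r where "r \<in> runs Q q ?t" "wt add mult zero one delta ?t r \<noteq> zero"
          "hV add mult zero one Q delta ?t q = wt add mult zero one delta ?t r" by blast
        moreover then have "r = rho" using UU rr by blast
        ultimately show ?thesis by metis
      qed
      show ?thesis using c eqs Rq qQ ex1 hv by (auto simp del: wt.simps hV.simps)
    qed
  qed
  show ?thesis using i1 i2 iii by blast
qed

end
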